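(* Let $R\subseteq\mathbb{R}^2$ be open and let $f:R\to\mathbb{R}^2$ be a light $C^1$ function. Let $R_1$ and $R_2$ be distinct connected components of $R\setminus f^{-1}(f(S)\cup C(f))$ with $\overline{R_1}\cap\overline{R_2}\neq\varnothing$, and suppose $f(R_1)=f(R_2)=\Omega$. If $\partial\Omega\cap\operatorname{int}\overline{\Omega}$ consists of a finite number of points, then there is no non-empty, non-degenerate connected set $\gamma\subseteq(\overline{R_1}\cap\overline{R_2}\cap R)\setminus S$ such that $R_1\cup R_2\cup\gamma$ is open.
   Context: A function is light if the preimage of each point is empty or totally disconnected. A connected set is degenerate if it consists of a single point. Write $f=(u,v)$; $J_f=u_xv_y-u_yv_x$ and $S=\{z\in R: J_f(z)=0\}$. $C(f)$ is the set of finite points $\zeta\in\mathbb{R}^2$ for which there is a sequence $(z_n)\subset R$ converging to a point of $\partial R$ or with $|z_n|\to\infty$, such that $f(z_n)\to\zeta$. *)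

theory Defs
  imports "HOL-Analysis.Analysis"
begin

definition totally_disconnected :: "'a::topological_space set \<Rightarrow> bool" where
  "totally_disconnected A \<longleftrightarrow> (\<forall>C. C \<subseteq> A \<and> connected C \<longrightarrow> (\<exists>a. C \<subseteq> {a}))"

definition light_on :: "(real^2) set \<Rightarrow> (real^2 \<Rightarrow> real^2) \<Rightarrow> bool" where
  "light_on R f \<longleftrightarrow> (\<forall>y. totally_disconnected {x \<in> R. f x = y})"

definition C1_on :: "(real^2) set \<Rightarrow> (real^2 \<Rightarrow> real^2) \<Rightarrow> bool" where
  "C1_on R f \<longleftrightarrow> (\<exists>f' :: real^2 \<Rightarrow> ((real^2) \<Rightarrow>\<^sub>L (real^2)).
      (\<forall>x\<in>R. (f has_derivative blinfun_apply (f' x)) (at x)) \<and> continuous_on R f')"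

definition jacobian :: "(real^2 \<Rightarrow> real^2) \<Rightarrow> real^2 \<Rightarrow> real" where
  "jacobian f z = det (matrix (frechet_derivative f (at z)))"

definition crit_set :: "(real^2) set \<Rightarrow> (real^2 \<Rightarrow> real^2) \<Rightarrow> (real^2) set" where
  "crit_set R f = {z \<in> R. jacobian f z = 0}"

definition cluster_set :: "(real^2) set \<Rightarrow> (real^2 \<Rightarrow> real^2) \<Rightarrow> (real^2) set" where
  "cluster_set R f = {\<zeta>. \<exists>z :: nat \<Rightarrow> real^2. (\<forall>n. z n \<in> R) \<and>
      ((\<exists>p\<in>frontier R. z \<longlonglongrightarrow> p) \<or> filterlim (\<lambda>n. norm (z n)) at_top sequentially) \<and>
      (\<lambda>n. f (z n)) \<longlonglongrightarrow> \<zeta>}"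

end

theory Submission imports Defs begin

lemma unbounded_subseq:
  fixes w :: "nat \<Rightarrow> 'a::real_normed_vector"
  assumes "\<not> bounded (range w)"
  shows "\<exists>r. strict_mono r \<and> filterlim (\<lambda>k. norm (w (r k))) at_top sequentially"
proof -
  have "\<exists>m>n. norm (w m) > B" for n :: nat and B :: real
  proof (rule ccontr)
    assume "\<not> ?thesis"
    then have h: "\<And>m. m > n \<Longrightarrow> norm (w m) \<le> B" by (meson not_less)
    define M where "M = max B (Max ((\<lambda>m. norm (w m)) ` {..n}))"
    have "norm (w m) \<le> M" for m
    proof (cases "m \<le> n")
      case True
      then show ?thesis unfolding M_def by (simp add: le_max_iff_disj)
    next
      case False
      then show ?thesis using h[of m] unfolding M_def by simp
    qed
    then have "bounded (range w)" by (auto simp: bounded_iff)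
    then show False using assms by simp
  qed
  then obtain g where g: "\<And>n B. g n B > n \<and> norm (w (g n B)) > B" by metis
  define r where "r = rec_nat (g 0 0) (\<lambda>k rk. g rk (real (Suc k)))"
  have r0: "r 0 = g 0 0" and rS: "r (Suc k) = g (r k) (real (Suc k))" for k
    by (simp_all add: r_def)
  have "strict_mono r"
    by (rule strict_monoI_Suc) (simp add: rS g)
  moreover have "norm (w (r k)) \<ge> real k" for k
    by (cases k) (use g in \<open>auto simp: r0 rS less_imp_le\<close>)
  then have "filterlim (\<lambda>k. norm (w (r k))) at_top sequentially"
    by (intro filterlim_at_top_mono[OF filterlim_real_sequentially]) auto
  ultimately show ?thesis by blast
qed

lemma escape:
  fixes R :: "(real^2) set" and f :: "real^2 \<Rightarrow> real^2" and w :: "nat \<Rightarrow> real^2"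
  assumes "open R" and wR: "\<And>n. w n \<in> R" and lim: "(\<lambda>n. f (w n)) \<longlonglongrightarrow> \<zeta>"
    and nc: "\<zeta> \<notin> cluster_set R f"
  shows "\<exists>p\<in>R. \<exists>r. strict_mono r \<and> (w \<circ> r) \<longlonglongrightarrow> p"
proof (cases "bounded (range w)")
  case False
  then obtain r where r: "strict_mono r" "filterlim (\<lambda>k. norm (w (r k))) at_top sequentially"
    using unbounded_subseq by blast
  have "(\<lambda>k. f (w (r k))) \<longlonglongrightarrow> \<zeta>"
    using LIMSEQ_subseq_LIMSEQ[OF lim r(1)] by (simp add: o_def)
  then have "\<zeta> \<in> cluster_set R f"
    unfolding cluster_set_def using r(2) wR by (intro CollectI exI[of _ "\<lambda>k. w (r k)"]) auto
  with nc show ?thesis by blast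
next
  case True
  then obtain l r where r: "strict_mono r" "(w \<circ> r) \<longlonglongrightarrow> l"
    using bounded_imp_convergent_subsequence by blast
  have "l \<in> closure R"
    using r(2) wR by (metis closure_sequential comp_apply)
  show ?thesis
  proof (cases "l \<in> R")
    case True
    then show ?thesis using r by blast
  next
    case False
    then have "l \<in> frontier R"
      using \<open>l \<in> closure R\<close> \<open>open R\<close> by (simp add: frontier_def interior_open)
    have "(\<lambda>k. f (w (r k))) \<longlonglongrightarrow> \<zeta>"
      using LIMSEQ_subseq_LIMSEQ[OF lim r(1)] by (simp add: o_def)
    then have "\<zeta> \<in> cluster_set R f"
      unfolding cluster_set_def using r(2) wR \<open>l \<in> frontier R\<close>
      by (intro CollectI exI[of _ "\<lambda>k. w (r k)"]) (auto simp: o_def)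
    with nc show ?thesis by blast
  qed
qed

lemma pick_w:
  fixes R :: "(real^2) set" and f :: "real^2 \<Rightarrow> real^2"
  assumes "y \<in> f ` crit_set R f \<union> cluster_set R f" and "e > 0"
  shows "\<exists>w\<in>R. dist (f w) y < e \<and> (w \<in> crit_set R f \<or> (\<exists>p\<in>frontier R. dist w p < e) \<or> norm w > B)"
  using assms(1)
proof
  assume "y \<in> f ` crit_set R f"
  then obtain s where "s \<in> crit_set R f" "y = f s" by blast
  then show ?thesis using \<open>e > 0\<close> by (intro bexI[of _ s]) (auto simp: crit_set_def)
next
  assume "y \<in> cluster_set R f"
  then obtain z where zR: "\<And>n. z n \<in> R" and zc: "(\<exists>p\<in>frontier R. z \<longlonglongrightarrow> p) \<or> filterlim (\<lambda>n. norm (z n)) at_top sequentially"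
    and zl: "(\<lambda>n. f (z n)) \<longlonglongrightarrow> y"
    unfolding cluster_set_def by blast
  have ev1: "eventually (\<lambda>n. dist (f (z n)) y < e) sequentially"
    using zl \<open>e > 0\<close> by (rule tendstoD)
  have ev2: "eventually (\<lambda>n. (\<exists>p\<in>frontier R. dist (z n) p < e) \<or> norm (z n) > B) sequentially"
    using zc
  proof
    assume "\<exists>p\<in>frontier R. z \<longlonglongrightarrow> p"
    then obtain p where "p \<in> frontier R" "z \<longlonglongrightarrow> p" by blast
    then have "eventually (\<lambda>n. dist (z n) p < e) sequentially" using \<open>e > 0\<close> by (rule_tac tendstoD)
    then show ?thesis by eventually_elim (use \<open>p \<in> frontier R\<close> in blast)
  next
    assume "filterlim (\<lambda>n. norm (z n)) at_top sequentially"
    then have "eventually (\<lambda>n. norm (z n) > B) sequentially"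
      by (simp add: filterlim_at_top_dense)
    then show ?thesis by eventually_elim blast
  qed
  obtain n where "dist (f (z n)) y < e" "(\<exists>p\<in>frontier R. dist (z n) p < e) \<or> norm (z n) > B"
    using eventually_happens'[OF _ eventually_conj[OF ev1 ev2]] by auto
  then show ?thesis using zR[of n] by blast
qed


lemma close_seq:
  fixes a b :: "nat \<Rightarrow> 'a::metric_space"
  assumes "\<And>n. dist (a n) (b n) < inverse (real (Suc n))" and "b \<longlonglongrightarrow> l"
  shows "a \<longlonglongrightarrow> l"
proof -
  have "(\<lambda>n. dist (b n) l) \<longlonglongrightarrow> 0" using assms(2) tendsto_dist_iff by blast
  then have h: "(\<lambda>n. inverse (real (Suc n)) + dist (b n) l) \<longlonglongrightarrow> 0"
    using tendsto_add[OF LIMSEQ_inverse_real_of_nat] by fastforce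
  have "(\<lambda>n. dist (a n) l) \<longlonglongrightarrow> 0"
  proof (rule tendsto_sandwich[OF _ _ tendsto_const h])
    show "\<forall>\<^sub>F n in sequentially. 0 \<le> dist (a n) l" by simp
    show "\<forall>\<^sub>F n in sequentially. dist (a n) l \<le> inverse (real (Suc n)) + dist (b n) l"
    proof (intro always_eventually allI)
      fix n
      show "dist (a n) l \<le> inverse (real (Suc n)) + dist (b n) l"
        using dist_triangle[of "a n" l "b n"] assms(1)[of n] by linarith
    qed
  qed
  then show ?thesis using tendsto_dist_iff by blast
qed

lemma E_open:
  fixes R :: "(real^2) set" and f :: "real^2 \<Rightarrow> real^2"
  assumes oR: "open R" and contf: "continuous_on R f" and contJ: "continuous_on R (jacobian f)"
  shows "open (R - {x \<in> R. f x \<in> f ` crit_set R f \<union> cluster_set R f})"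
    (is "open (R - ?E)")
proof (rule openI)
  fix x assume x: "x \<in> R - ?E"
  obtain d where d: "d > 0" "ball x d \<subseteq> R" using oR x openE by blast
  show "\<exists>e>0. ball x e \<subseteq> R - ?E"
  proof (rule ccontr)
    assume H: "\<not> ?thesis"
    have "\<exists>y. y \<in> ball x (min d (inverse (real (Suc n)))) \<and> y \<in> ?E" for n
    proof -
      have "min d (inverse (real (Suc n))) > 0" using d by simp
      then have "\<not> ball x (min d (inverse (real (Suc n)))) \<subseteq> R - ?E" using H by blast
      then obtain y where y1: "y \<in> ball x (min d (inverse (real (Suc n))))" and y2: "y \<notin> R - ?E"
        by blast
      have "y \<in> R" using y1 d(2) by auto
      then show ?thesis using y1 y2 by blast
    qed
    then have "\<forall>n. \<exists>y. y \<in> ball x (min d (inverse (real (Suc n)))) \<and> y \<in> ?E" by blast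
    from choice[OF this] obtain y where y0: "\<forall>n. y n \<in> ball x (min d (inverse (real (Suc n)))) \<and> y n \<in> ?E"
      by blast
    have y: "\<And>n. y n \<in> ball x (min d (inverse (real (Suc n))))" "\<And>n. y n \<in> ?E"
      using y0 by blast+
    have yx: "y \<longlonglongrightarrow> x"
      by (rule close_seq[where b="\<lambda>_. x"]) (use y(1) in \<open>auto simp: dist_commute\<close>)
    have isf: "isCont f x" using contf oR x continuous_on_eq_continuous_at by blast
    have fy: "(\<lambda>n. f (y n)) \<longlonglongrightarrow> f x" using isCont_tendsto_compose[OF isf yx] .
    have "\<exists>w\<in>R. dist (f w) (f (y n)) < inverse (real (Suc n)) \<and>
        (w \<in> crit_set R f \<or> (\<exists>p\<in>frontier R. dist w p < inverse (real (Suc n))) \<or> norm w > real n)" for n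
      using y(2)[of n] by (intro pick_w) auto
    then have "\<forall>n. \<exists>w. w \<in> R \<and> dist (f w) (f (y n)) < inverse (real (Suc n)) \<and>
        (w \<in> crit_set R f \<or> (\<exists>p\<in>frontier R. dist w p < inverse (real (Suc n))) \<or> norm w > real n)" by blast
    from choice[OF this] obtain w where w0: "\<forall>n. w n \<in> R \<and> dist (f (w n)) (f (y n)) < inverse (real (Suc n)) \<and>
        (w n \<in> crit_set R f \<or> (\<exists>p\<in>frontier R. dist (w n) p < inverse (real (Suc n))) \<or> norm (w n) > real n)"
      by blast
    have wR: "\<And>n. w n \<in> R" and wd: "\<And>n. dist (f (w n)) (f (y n)) < inverse (real (Suc n))"
      and wc: "\<And>n. w n \<in> crit_set R f \<or> (\<exists>p\<in>frontier R. dist (w n) p < inverse (real (Suc n))) \<or> norm (w n) > real n"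
      using w0 by blast+
    have fw: "(\<lambda>n. f (w n)) \<longlonglongrightarrow> f x" by (rule close_seq[OF wd fy])
    have nc: "f x \<notin> cluster_set R f" using x by auto
    obtain p r where pR: "p \<in> R" and r: "strict_mono r" "(w \<circ> r) \<longlonglongrightarrow> p"
      using escape[OF oR wR fw nc] by blast
    have isfp: "isCont f p" using contf oR pR continuous_on_eq_continuous_at by blast
    have "(\<lambda>k. f (w (r k))) \<longlonglongrightarrow> f p" using isCont_tendsto_compose[OF isfp r(2)[unfolded o_def]] .
    moreover have "(\<lambda>k. f (w (r k))) \<longlonglongrightarrow> f x" using LIMSEQ_subseq_LIMSEQ[OF fw r(1)] by (simp add: o_def)
    ultimately have fpx: "f p = f x" using LIMSEQ_unique by blast
    have Jp: "jacobian f p \<noteq> 0"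
    proof
      assume "jacobian f p = 0"
      then have "p \<in> crit_set R f" using pR by (simp add: crit_set_def)
      then show False using x fpx by (metis (no_types, lifting) DiffD2 UnCI image_eqI mem_Collect_eq DiffD1)
    qed
    have isJ: "isCont (jacobian f) p" using contJ oR pR continuous_on_eq_continuous_at by blast
    have "(\<lambda>k. jacobian f (w (r k))) \<longlonglongrightarrow> jacobian f p" using isCont_tendsto_compose[OF isJ r(2)[unfolded o_def]] .
    then have ev1: "eventually (\<lambda>k. jacobian f (w (r k)) \<noteq> 0) sequentially"
      using Jp tendsto_imp_eventually_ne by blast
    have "bounded (range (w \<circ> r))" using r(2) convergent_imp_bounded by blast
    then obtain B where B0: "\<forall>v\<in>range (w \<circ> r). norm v \<le> B" unfolding bounded_iff by blast
    have B: "\<And>k. norm (w (r k)) \<le> B" using B0 by simp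
    have ev2: "eventually (\<lambda>k. \<not> norm (w (r k)) > real (r k)) sequentially"
    proof -
      obtain N :: nat where "B \<le> real N" using real_arch_simple by blast
      show ?thesis
      proof (rule eventually_sequentiallyI[of N])
        fix k assume "N \<le> k"
        then have "real N \<le> real (r k)" using seq_suble[OF r(1), of k] by simp
        then show "\<not> norm (w (r k)) > real (r k)" using B[of k] \<open>B \<le> real N\<close> by linarith
      qed
    qed
    obtain e where e: "e > 0" "ball p e \<subseteq> R" using oR pR openE by blast
    have ev3: "eventually (\<lambda>k. dist (w (r k)) p < e / 2) sequentially"
      using r(2) e by (intro tendstoD) (auto simp: o_def)
    have ev4: "eventually (\<lambda>k. inverse (real (Suc (r k))) < e / 2) sequentially"
    proof -
      have "(\<lambda>k. inverse (real (Suc (r k)))) \<longlonglongrightarrow> 0"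
        using LIMSEQ_subseq_LIMSEQ[OF LIMSEQ_inverse_real_of_nat r(1)] by (simp add: o_def)
      moreover have "(0::real) < e / 2" using e by simp
      ultimately show ?thesis by (rule order_tendstoD(2))
    qed
    have "eventually (\<lambda>k. False) sequentially"
      using ev1 ev2 ev3 ev4
    proof eventually_elim
      case (elim k)
      have c1: "w (r k) \<notin> crit_set R f" using elim(1) by (simp add: crit_set_def)
      have c3: "\<not> (\<exists>q\<in>frontier R. dist (w (r k)) q < inverse (real (Suc (r k))))"
      proof
        assume "\<exists>q\<in>frontier R. dist (w (r k)) q < inverse (real (Suc (r k)))"
        then obtain q where q: "q \<in> frontier R" "dist (w (r k)) q < inverse (real (Suc (r k)))" by blast
        then have "dist p q < e" using elim(3,4) dist_triangle[of p q "w (r k)"] dist_commute[of p "w (r k)"]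
          by linarith
        then have "q \<in> R" using e by auto
        then show False using q(1) oR by (simp add: frontier_def interior_open)
      qed
      show False using wc[of "r k"] c1 c3 elim(2) by blast
    qed
    then show False by simp
  qed
qed

lemma J_cont:
  fixes R :: "(real^2) set" and f :: "real^2 \<Rightarrow> real^2"
  assumes "C1_on R f"
  shows "continuous_on R (jacobian f)"
proof -
  obtain f' :: "real^2 \<Rightarrow> ((real^2) \<Rightarrow>\<^sub>L (real^2))" where
    d: "\<And>x. x \<in> R \<Longrightarrow> (f has_derivative blinfun_apply (f' x)) (at x)" and c: "continuous_on R f'"
    using assms unfolding C1_on_def by blast
  have e: "continuous_on R (\<lambda>z. blinfun_apply (f' z) v $ i)" for v i
    by (intro continuous_intros c)
  have "continuous_on R (\<lambda>z. det (matrix (blinfun_apply (f' z))))"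
    unfolding det_2 matrix_def by (simp add: e continuous_intros)
  moreover have "jacobian f z = det (matrix (blinfun_apply (f' z)))" if "z \<in> R" for z
    unfolding jacobian_def using frechet_derivative_at[OF d[OF that]] by simp
  ultimately show ?thesis using continuous_on_cong by force
qed

theorem lemma3p16:
  fixes R :: "(real^2) set" and f :: "real^2 \<Rightarrow> real^2"
    and R1 R2 \<Omega> :: "(real^2) set"
  assumes "open R" and "light_on R f" and "C1_on R f"
    and "R1 \<in> components (R - {x \<in> R. f x \<in> f ` crit_set R f \<union> cluster_set R f})"
    and "R2 \<in> components (R - {x \<in> R. f x \<in> f ` crit_set R f \<union> cluster_set R f})"
    and "R1 \<noteq> R2"
    and "closure R1 \<inter> closure R2 \<noteq> {}"
    and "f ` R1 = \<Omega>" and "f ` R2 = \<Omega>"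
    and "finite (frontier \<Omega> \<inter> interior (closure \<Omega>))"
  shows "\<not> (\<exists>\<gamma>. \<gamma> \<noteq> {} \<and> connected \<gamma> \<and> \<not> (\<exists>a. \<gamma> = {a}) \<and>
            \<gamma> \<subseteq> (closure R1 \<inter> closure R2 \<inter> R) - crit_set R f \<and>
            open (R1 \<union> R2 \<union> \<gamma>))"
proof
  assume "\<exists>\<gamma>. \<gamma> \<noteq> {} \<and> connected \<gamma> \<and> \<not> (\<exists>a. \<gamma> = {a}) \<and>
            \<gamma> \<subseteq> (closure R1 \<inter> closure R2 \<inter> R) - crit_set R f \<and>
            open (R1 \<union> R2 \<union> \<gamma>)"
  then obtain \<gamma> where gne: "\<gamma> \<noteq> {}" and gcon: "connected \<gamma>" and gns: "\<not> (\<exists>a. \<gamma> = {a})"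
    and gsub: "\<gamma> \<subseteq> (closure R1 \<inter> closure R2 \<inter> R) - crit_set R f"
    and gopen: "open (R1 \<union> R2 \<union> \<gamma>)" by blast
  define E where "E = {x \<in> R. f x \<in> f ` crit_set R f \<union> cluster_set R f}"
  note R1c = assms(4)[folded E_def] and R2c = assms(5)[folded E_def]
  obtain f' :: "real^2 \<Rightarrow> ((real^2) \<Rightarrow>\<^sub>L (real^2))" where
    d: "\<And>x. x \<in> R \<Longrightarrow> (f has_derivative blinfun_apply (f' x)) (at x)"
    using assms(3) unfolding C1_on_def by blast
  have contf: "continuous_on R f"
    using d has_derivative_continuous continuous_at_imp_continuous_on by blast
  have oE: "open (R - E)" unfolding E_def
    using E_open[OF assms(1) contf J_cont[OF assms(3)]] .
  have R1sub: "R1 \<subseteq> R - E" using R1c in_components_subset by blast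
  have R2sub: "R2 \<subseteq> R - E" using R2c in_components_subset by blast
  have disj: "R1 \<inter> R2 = {}" using R1c R2c assms(6) components_nonoverlap by blast
  have inE: "z \<in> E" if z: "z \<in> \<gamma>" for z
  proof (rule ccontr)
    assume "z \<notin> E"
    then have zRE: "z \<in> R - E" using gsub z by blast
    then obtain e where e: "e > 0" "ball z e \<subseteq> R - E" using oE openE by blast
    have hit: "z \<in> Rc" if Rc: "Rc \<in> components (R - E)" and zc: "z \<in> closure Rc" for Rc
    proof -
      have "z \<in> ball z e \<inter> closure Rc" using zc e(1) by simp
      then have "ball z e \<inter> closure Rc \<noteq> {}" by blast
      then have "ball z e \<inter> Rc \<noteq> {}" using open_Int_closure_eq_empty[of "ball z e" Rc] by auto
      then have "ball z e \<subseteq> Rc"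
        using components_maximal[OF Rc connected_ball e(2)] by blast
      then show ?thesis using e(1) by auto
    qed
    have "z \<in> R1" using hit[OF R1c] gsub z by blast
    moreover have "z \<in> R2" using hit[OF R2c] gsub z by blast
    ultimately show False using disj by blast
  qed
  have fnot: "f z \<notin> \<Omega>" if z: "z \<in> \<gamma>" for z
  proof
    assume "f z \<in> \<Omega>"
    then obtain y where y: "y \<in> R1" "f y = f z" using assms(8) by (metis imageE)
    then have "y \<in> R - E" using R1sub by blast
    moreover have "f z \<in> f ` crit_set R f \<union> cluster_set R f" using inE[OF z] unfolding E_def by blast
    ultimately have "y \<in> E" using y(2) unfolding E_def by simp
    then show False using \<open>y \<in> R - E\<close> by blast
  qed
  have fcl: "f z \<in> closure \<Omega>" if z: "z \<in> \<gamma>" for z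
  proof -
    have zR: "z \<in> R" and zc: "z \<in> closure R1" using gsub z by auto
    obtain x where x: "\<And>n. x n \<in> R1" "x \<longlonglongrightarrow> z" using zc closure_sequential by metis
    have "isCont f z" using contf assms(1) zR continuous_on_eq_continuous_at by blast
    then have "(\<lambda>n. f (x n)) \<longlonglongrightarrow> f z" using isCont_tendsto_compose x(2) by blast
    moreover have "\<And>n. f (x n) \<in> \<Omega>" using x(1) assms(8) by (metis imageI)
    ultimately show ?thesis unfolding closure_sequential by (intro exI[of _ "\<lambda>n. f (x n)"]) simp
  qed
  have fint: "f z \<in> interior (closure \<Omega>)" if z: "z \<in> \<gamma>" for z
  proof -
    define U where "U = R1 \<union> R2 \<union> \<gamma>"
    have zR: "z \<in> R" using gsub z by blast
    have UR: "U \<subseteq> R" unfolding U_def using R1sub R2sub gsub by blast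
    have zU: "z \<in> interior U" using gopen z unfolding U_def by (simp add: interior_open)
    have "jacobian f z \<noteq> 0" using gsub z zR unfolding crit_set_def by blast
    then have dnz: "det (matrix (blinfun_apply (f' z))) \<noteq> 0"
      unfolding jacobian_def using frechet_derivative_at[OF d[OF zR]] by simp
    have lin: "linear (blinfun_apply (f' z))"
      by (simp add: bounded_linear.linear blinfun.bounded_linear_right)
    have "inj (blinfun_apply (f' z))" using dnz det_nz_iff_inj[OF lin] by blast
    then obtain g' where g': "linear g'" "\<And>x. blinfun_apply (f' z) (g' x) = x"
      using linear_injective_isomorphism[OF lin \<open>inj (blinfun_apply (f' z))\<close>] by blast
    have "f z \<in> interior (f ` U)"
    proof (rule sussmann_open_mapping[OF assms(1) contf zR d[OF zR]])
      show "bounded_linear g'" using g'(1) linear_conv_bounded_linear by blast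
      show "blinfun_apply (f' z) \<circ> g' = id" using g'(2) by (simp add: fun_eq_iff)
      show "U \<subseteq> R" by (rule UR)
      show "z \<in> interior U" by (rule zU)
    qed
    moreover have "f ` U \<subseteq> closure \<Omega>"
    proof
      fix y assume "y \<in> f ` U"
      then obtain u where u: "u \<in> U" "y = f u" by blast
      show "y \<in> closure \<Omega>"
      proof (cases "u \<in> \<gamma>")
        case True then show ?thesis using fcl u(2) by simp
      next
        case False
        then have "u \<in> R1 \<or> u \<in> R2" using u(1) unfolding U_def by blast
        then have "y \<in> \<Omega>" using u(2) assms(8,9) by (metis imageI)
        then show ?thesis using closure_subset by blast
      qed
    qed
    ultimately show ?thesis using interior_mono by blast
  qed
  have "f ` \<gamma> \<subseteq> frontier \<Omega> \<inter> interior (closure \<Omega>)"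
  proof
    fix y assume "y \<in> f ` \<gamma>"
    then obtain z where z: "z \<in> \<gamma>" "y = f z" by blast
    have "y \<notin> interior \<Omega>" using fnot[OF z(1)] z(2) interior_subset by blast
    then show "y \<in> frontier \<Omega> \<inter> interior (closure \<Omega>)"
      using fcl[OF z(1)] fint[OF z(1)] z(2) unfolding frontier_def by simp
  qed
  then have fin: "finite (f ` \<gamma>)" using assms(10) finite_subset by blast
  have "connected (f ` \<gamma>)"
  proof (rule connected_continuous_image[OF continuous_on_subset[OF contf] gcon])
    show "\<gamma> \<subseteq> R" using gsub by blast
  qed
  then obtain a where a: "f ` \<gamma> = {a}" using fin gne connected_finite_iff_sing by blast
  then have "\<gamma> \<subseteq> {x \<in> R. f x = a}" using gsub by blast
  then obtain b where "\<gamma> \<subseteq> {b}"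
    using assms(2) gcon unfolding light_on_def totally_disconnected_def by blast
  then show False using gne gns by blast
qed

end
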